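(* Let $V:[0,\infty)\to\mathbb{R}$ be càdlàg with finite variation on compact intervals. Let $t>0$, and let $x$ be a simple level for $V$ with $x\neq V(0)$ and $x\neq V(t)$. Then the sets $(0,t]\cap\mathcal{I}(x)$ and $(0,t]\cap\mathcal{D}(x)$ are finite. The sum below has only finitely many nonzero terms, and $$\mathbf{1}_{[x,\infty)}(V(t))=\mathbf{1}_{[x,\infty)}(V(0))+\ell^x(t)+\sum_{0<s\le t}\Big(\mathbf{1}_{[x,\infty)}(V(s))-\mathbf{1}_{[x,\infty)}(V(s-))\Big).$$
   Context: $V(s-)$ is the left limit and $\Delta V(s)=V(s)-V(s-)$. A level $x\in\mathbb{R}$ is simple for $V$ if two conditions hold. First, the set $\{t>0: V(t-)<x<V(t)\text{ or }V(t)<x<V(t-)\text{ or }V(t)=x\}$ is discrete. Second, there is no $t>0$ with $\Delta V(t)\ne0$ and $x\in\{V(t),V(t-)\}$. We write $t\in\mathcal{I}(x)$ (i.e. $V$ increases through level $x$ at time $t$) if two conditions hold. First, $V(t)=x$ and $V$ is continuous at $t$. Second, there is $\delta>0$ such that for all $s\ge0$ with $0<|s-t|<\delta$, $V(s)-V(t)$ has the same strict sign as $s-t$. We write $t\in\mathcal{D}(x)$ (i.e. $V$ decreases through level $x$ at time $t$) if $-V$ increases through $-x$ at time $t$. Finally $\ell^x(t)=\mathrm{Card}((0,t]\cap\mathcal{I}(x))-\mathrm{Card}((0,t]\cap\mathcal{D}(x))$. *)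

theory Defs
  imports "HOL-Analysis.Analysis"
begin

text \<open>Paths are functions V :: real => real; only their values on [0,oo) are relevant.\<close>

definition left_lim :: "(real \<Rightarrow> real) \<Rightarrow> real \<Rightarrow> real" where
  "left_lim V t = Lim (at_left t) V"

definition cadlag_on_nonneg :: "(real \<Rightarrow> real) \<Rightarrow> bool" where
  "cadlag_on_nonneg V \<longleftrightarrow>
     (\<forall>t\<ge>0. (V \<longlongrightarrow> V t) (at_right t)) \<and>
     (\<forall>t>0. \<exists>L. (V \<longlongrightarrow> L) (at_left t))"

definition bounded_variation_on :: "(real \<Rightarrow> real) \<Rightarrow> real \<Rightarrow> real \<Rightarrow> bool" where
  "bounded_variation_on V a b \<longleftrightarrow>
     (\<exists>B. \<forall>(n::nat) (p::nat \<Rightarrow> real).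
        (\<forall>i\<le>n. a \<le> p i \<and> p i \<le> b) \<and> (\<forall>i<n. p i \<le> p (Suc i)) \<longrightarrow>
        (\<Sum>i<n. \<bar>V (p (Suc i)) - V (p i)\<bar>) \<le> B)"

definition finite_variation_compacts :: "(real \<Rightarrow> real) \<Rightarrow> bool" where
  "finite_variation_compacts V \<longleftrightarrow> (\<forall>T\<ge>0. bounded_variation_on V 0 T)"

definition simple_level :: "(real \<Rightarrow> real) \<Rightarrow> real \<Rightarrow> bool" where
  "simple_level V x \<longleftrightarrow>
     discrete {t. t > 0 \<and> ((left_lim V t < x \<and> x < V t) \<or> (V t < x \<and> x < left_lim V t) \<or> V t = x)} \<and>
     \<not> (\<exists>t>0. V t - left_lim V t \<noteq> 0 \<and> (x = V t \<or> x = left_lim V t))"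

definition increases_through :: "(real \<Rightarrow> real) \<Rightarrow> real \<Rightarrow> real \<Rightarrow> bool" where
  "increases_through V x t \<longleftrightarrow>
     V t = x \<and> continuous (at t within {0..}) V \<and>
     (\<exists>\<delta>>0. \<forall>s\<ge>0. 0 < \<bar>s - t\<bar> \<and> \<bar>s - t\<bar> < \<delta> \<longrightarrow> sgn (V s - V t) = sgn (s - t))"

definition decreases_through :: "(real \<Rightarrow> real) \<Rightarrow> real \<Rightarrow> real \<Rightarrow> bool" where
  "decreases_through V x t \<longleftrightarrow> increases_through (\<lambda>s. - V s) (- x) t"

definition incr_set :: "(real \<Rightarrow> real) \<Rightarrow> real \<Rightarrow> real set" where
  "incr_set V x = {t. increases_through V x t}"

definition decr_set :: "(real \<Rightarrow> real) \<Rightarrow> real \<Rightarrow> real set" where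
  "decr_set V x = {t. decreases_through V x t}"

definition level_count :: "(real \<Rightarrow> real) \<Rightarrow> real \<Rightarrow> real \<Rightarrow> int" where
  "level_count V x t = int (card ({0<..t} \<inter> incr_set V x)) - int (card ({0<..t} \<inter> decr_set V x))"

end

theory Submission
  imports Defs
begin

lemma base_up:
  fixes W LW :: "real \<Rightarrow> real"
  assumes r: "\<And>s. a \<le> s \<Longrightarrow> s \<le> b \<Longrightarrow> (W \<longlongrightarrow> W s) (at_right s)"
    and l: "\<And>s. a < s \<Longrightarrow> s \<le> b \<Longrightarrow> (W \<longlongrightarrow> LW s) (at_left s)"
    and nc: "\<And>s. a < s \<Longrightarrow> s \<le> b \<Longrightarrow> LW s \<le> x \<Longrightarrow> W s < x"
    and Wa: "W a < x"
    and u: "a \<le> u" "u \<le> b"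
  shows "W u < x"
proof (rule ccontr)
  assume nu: "\<not> W u < x"
  define C where "C = {s. a \<le> s \<and> s \<le> b \<and> x \<le> W s}"
  define c where "c = Inf C"
  have uC: "u \<in> C" using nu u by (auto simp: C_def)
  have bdd: "bdd_below C" by (auto simp: C_def bdd_below_def)
  have ac: "a \<le> c" unfolding c_def using uC by (intro cInf_greatest) (auto simp: C_def)
  have cu: "c \<le> u" unfolding c_def using uC bdd by (rule cInf_lower)
  have below: "W s < x" if "a \<le> s" "s < c" for s
  proof (rule ccontr)
    assume "\<not> W s < x"
    then have "s \<in> C" using that cu u by (auto simp: C_def)
    then have "c \<le> s" unfolding c_def using bdd by (rule cInf_lower)
    then show False using that by simp
  qed
  have Wc: "x \<le> W c"
  proof (rule ccontr)
    assume "\<not> x \<le> W c"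
    then have "eventually (\<lambda>y. W y < x) (at_right c)"
      using r[of c] ac cu u by (intro order_tendstoD(2)) auto
    then obtain b' where b': "b' > c" "\<forall>y>c. y < b' \<longrightarrow> W y < x"
      by (auto simp: eventually_at_right_field)
    have "Inf C < b'" using b' c_def by simp
    then obtain y where y: "y \<in> C" "y < b'" using cInf_less_iff[OF _ bdd] uC by blast
    have "c \<le> y" unfolding c_def using y(1) bdd by (rule cInf_lower)
    moreover have "y \<noteq> c" using y(1) \<open>\<not> x \<le> W c\<close> by (auto simp: C_def)
    ultimately have "W y < x" using b' y by auto
    then show False using y(1) by (auto simp: C_def)
  qed
  have ac': "a < c" using Wa Wc ac by (cases "a = c") auto
  have "LW c \<le> x"
  proof (rule tendsto_upperbound[OF l[of c]])
    show "a < c" by (rule ac')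
    show "c \<le> b" using cu u by simp
    show "\<forall>\<^sub>F i in at_left c. W i \<le> x"
      unfolding eventually_at_left_field using ac' below by (intro exI[of _ a]) (auto intro: less_imp_le)
  qed simp
  then have "W c < x" using nc[of c] ac' cu u by auto
  then show False using Wc by simp
qed

lemma base_down:
  fixes W LW :: "real \<Rightarrow> real"
  assumes r: "\<And>s. a \<le> s \<Longrightarrow> s \<le> b \<Longrightarrow> (W \<longlongrightarrow> W s) (at_right s)"
    and l: "\<And>s. a < s \<Longrightarrow> s \<le> b \<Longrightarrow> (W \<longlongrightarrow> LW s) (at_left s)"
    and nc: "\<And>s. a < s \<Longrightarrow> s \<le> b \<Longrightarrow> LW s \<ge> x \<Longrightarrow> W s > x"
    and Wa: "W a > x"
    and u: "a \<le> u" "u \<le> b"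
  shows "W u > x"
proof -
  have "(\<lambda>s. - W s) u < - x"
    apply (rule base_up[where W="\<lambda>s. - W s" and LW="\<lambda>s. - LW s" and a=a and b=b])
    using r l nc Wa u by (auto intro!: tendsto_minus)
  then show ?thesis by simp
qed


lemma incr_yes:
  fixes V :: "real \<Rightarrow> real"
  assumes "V m = x" "continuous (at m within {0..}) V" "p < m" "m < b"
    and L: "\<And>u. p < u \<Longrightarrow> u < m \<Longrightarrow> V u < x"
    and R: "\<And>u. m < u \<Longrightarrow> u < b \<Longrightarrow> V u > x"
  shows "increases_through V x m"
  unfolding increases_through_def
proof (intro conjI exI[of _ "min (m - p) (b - m)"] allI impI)
  fix s :: real assume s: "0 \<le> s" "0 < \<bar>s - m\<bar> \<and> \<bar>s - m\<bar> < min (m - p) (b - m)"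
  show "sgn (V s - V m) = sgn (s - m)"
  proof (cases "s < m")
    case True
    then have "V s < x" using s by (intro L) (auto simp: abs_if split: if_splits)
    then show ?thesis using True assms(1) by simp
  next
    case False
    then have "m < s" using s by auto
    then have "V s > x" using s by (intro R) (auto simp: abs_if split: if_splits)
    then show ?thesis using \<open>m < s\<close> assms(1) by simp
  qed
qed (use assms in auto)

lemma incr_no_right:
  fixes V :: "real \<Rightarrow> real"
  assumes "0 \<le> m" "m < b" and R: "\<And>u. m < u \<Longrightarrow> u < b \<Longrightarrow> V u < V m"
  shows "\<not> increases_through V x m"
proof
  assume "increases_through V x m"
  then obtain d where d: "d > 0" "\<forall>s\<ge>0. 0 < \<bar>s - m\<bar> \<and> \<bar>s - m\<bar> < d \<longrightarrow> sgn (V s - V m) = sgn (s - m)"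
    unfolding increases_through_def by blast
  define s where "s = m + min d (b - m) / 2"
  have "min d (b - m) \<le> d" "min d (b - m) \<le> b - m" "min d (b - m) > 0" using d assms by auto
  then have s: "m < s" "s < b" "s - m < d" unfolding s_def by (auto simp: min_def split: if_splits)
  have "sgn (V s - V m) = sgn (s - m)" using d(2)[rule_format, of s] s assms(1) by auto
  moreover have "V s < V m" using R s by auto
  ultimately show False using s by simp
qed

lemma incr_no_left:
  fixes V :: "real \<Rightarrow> real"
  assumes "0 \<le> p" "p < m" and L: "\<And>u. p < u \<Longrightarrow> u < m \<Longrightarrow> V u > V m"
  shows "\<not> increases_through V x m"
proof
  assume "increases_through V x m"
  then obtain d where d: "d > 0" "\<forall>s\<ge>0. 0 < \<bar>s - m\<bar> \<and> \<bar>s - m\<bar> < d \<longrightarrow> sgn (V s - V m) = sgn (s - m)"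
    unfolding increases_through_def by blast
  define s where "s = m - min d (m - p) / 2"
  have "min d (m - p) \<le> d" "min d (m - p) \<le> m - p" "min d (m - p) > 0" using d assms by auto
  then have s: "s < m" "p < s" "m - s < d" unfolding s_def by (auto simp: min_def split: if_splits)
  have "sgn (V s - V m) = sgn (s - m)" using d(2)[rule_format, of s] s assms(1) by auto
  moreover have "V s > V m" using L s by auto
  ultimately show False using s by simp
qed

definition EV :: "(real \<Rightarrow> real) \<Rightarrow> real \<Rightarrow> real set" where
  "EV V x = {t. t > 0 \<and> ((left_lim V t < x \<and> x < V t) \<or> (V t < x \<and> x < left_lim V t) \<or> V t = x)}"

definition ind :: "(real \<Rightarrow> real) \<Rightarrow> real \<Rightarrow> real \<Rightarrow> real" where
  "ind V x u = indicator {x..} (V u)"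

definition cc :: "(real \<Rightarrow> real) \<Rightarrow> real \<Rightarrow> real \<Rightarrow> real" where
  "cc V x m = (indicator {x..} (V m) - indicator {x..} (left_lim V m))
     + of_bool (m \<in> incr_set V x) - of_bool (m \<in> decr_set V x)"

locale lvl =
  fixes V :: "real \<Rightarrow> real" and x :: real
  assumes rc: "\<And>s. 0 \<le> s \<Longrightarrow> (V \<longlongrightarrow> V s) (at_right s)"
    and lc: "\<And>s. 0 < s \<Longrightarrow> (V \<longlongrightarrow> left_lim V s) (at_left s)"
    and jmp: "\<And>s. 0 < s \<Longrightarrow> V s = x \<or> left_lim V s = x \<Longrightarrow> V s = left_lim V s"
    and disc: "discrete (EV V x)"
    and x0: "V 0 \<noteq> x"
begin

lemma nonev:
  assumes "0 < s" "s \<notin> EV V x"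
  shows "(V s < x \<and> left_lim V s < x) \<or> (V s > x \<and> left_lim V s > x)"
proof -
  have "V s \<noteq> x" using assms by (auto simp: EV_def)
  moreover have "left_lim V s \<noteq> x" using jmp[OF assms(1)] \<open>V s \<noteq> x\<close> by auto
  ultimately show ?thesis using assms by (auto simp: EV_def)
qed

lemma sign_prop:
  assumes "0 \<le> a" "a \<le> u" "u \<le> b" "EV V x \<inter> {a<..b} = {}"
  shows "(V a < x \<longrightarrow> V u < x) \<and> (V a > x \<longrightarrow> V u > x)"
proof -
  have ne: "(V s < x \<and> left_lim V s < x) \<or> (V s > x \<and> left_lim V s > x)" if "a < s" "s \<le> b" for s
  proof -
    have "s \<notin> EV V x" using assms(4) that by auto
    then show ?thesis using nonev[of s] that assms(1) by auto
  qed
  show ?thesis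
  proof (intro conjI impI)
    assume "V a < x"
    show "V u < x"
    proof (rule base_up[where W = V and LW = "left_lim V" and a = a and b = b])
      fix s assume "a < s" "s \<le> b" "left_lim V s \<le> x" then show "V s < x" using ne[of s] by auto
    qed (use assms \<open>V a < x\<close> in \<open>auto intro: rc lc\<close>)
  next
    assume "V a > x"
    show "V u > x"
    proof (rule base_down[where W = V and LW = "left_lim V" and a = a and b = b])
      fix s assume "a < s" "s \<le> b" "left_lim V s \<ge> x" then show "V s > x" using ne[of s] by auto
    qed (use assms \<open>V a > x\<close> in \<open>auto intro: rc lc\<close>)
  qed
qed

lemma not_ev_near:
  assumes "0 < y" "\<bar>V y - c\<bar> < d" "\<bar>left_lim V y - c\<bar> \<le> d" "2 * d \<le> \<bar>c - x\<bar>"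
  shows "y \<notin> EV V x"
  using assms by (auto simp: EV_def abs_if split: if_splits)

lemma ll_est:
  assumes "0 < y" "b < y" "\<And>w. b < w \<Longrightarrow> w < y \<Longrightarrow> \<bar>V w - c\<bar> < d"
  shows "\<bar>left_lim V y - c\<bar> \<le> d"
proof (rule tendsto_upperbound)
  show "((\<lambda>w. \<bar>V w - c\<bar>) \<longlongrightarrow> \<bar>left_lim V y - c\<bar>) (at_left y)"
    by (intro tendsto_rabs tendsto_diff lc assms tendsto_const)
  show "\<forall>\<^sub>F w in at_left y. \<bar>V w - c\<bar> \<le> d"
    unfolding eventually_at_left_field using assms by (intro exI[of _ b]) (auto intro: less_imp_le)
qed simp

lemma ev_finite: "finite (EV V x \<inter> {0..T})"
proof -
  have "finite ({0..T} \<inter> EV V x)"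
  proof (rule finite_not_islimpt_in_compact)
    fix z assume z: "z \<in> {0..T}"
    show "\<not> z islimpt EV V x"
      unfolding islimpt_iff_eventually
    proof (cases "z \<in> EV V x")
      case True
      then show "\<not> \<not> (\<forall>\<^sub>F y in at z. y \<notin> EV V x)"
        using disc by (auto simp: discrete_def isolated_in_altdef)
    next
      case False
      have Vz: "V z \<noteq> x" using False x0 z nonev[of z] by (cases "z = 0") auto
      have right: "\<forall>\<^sub>F y in at_right z. y \<notin> EV V x"
      proof -
        define d where "d = \<bar>V z - x\<bar> / 2"
        have d: "d > 0" using Vz by (simp add: d_def)
        have "\<forall>\<^sub>F y in at_right z. dist (V y) (V z) < d"
          using rc[of z] z d by (intro tendstoD) auto
        then obtain b where b: "b > z" "\<And>y. z < y \<Longrightarrow> y < b \<Longrightarrow> \<bar>V y - V z\<bar> < d"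
          unfolding eventually_at_right_field dist_real_def by blast
        show ?thesis unfolding eventually_at_right_field
        proof (intro exI[of _ b] conjI allI impI)
          fix y assume y: "z < y" "y < b"
          show "y \<notin> EV V x"
          proof (rule not_ev_near[where c = "V z" and d = d])
            show "0 < y" using y z by auto
            show "\<bar>V y - V z\<bar> < d" using b y by auto
            show "\<bar>left_lim V y - V z\<bar> \<le> d"
              by (rule ll_est[where b = z]) (use y z b in auto)
          qed (simp add: d_def)
        qed (rule b)
      qed
      have left: "\<forall>\<^sub>F y in at_left z. y \<notin> EV V x"
      proof (cases "z = 0")
        case True
        then show ?thesis unfolding eventually_at_left_field
          by (intro exI[of _ "-1"]) (auto simp: EV_def)
      next
        case False
        then have zp: "z > 0" using z by auto
        define L where "L = left_lim V z"
        have Lx: "L \<noteq> x" using nonev[OF zp \<open>z \<notin> EV V x\<close>] by (auto simp: L_def)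
        define d where "d = \<bar>L - x\<bar> / 2"
        have d: "d > 0" using Lx by (simp add: d_def)
        have "\<forall>\<^sub>F y in at_left z. dist (V y) L < d"
          using lc[OF zp] d unfolding L_def by (intro tendstoD) auto
        then obtain b where b: "b < z" "\<And>y. b < y \<Longrightarrow> y < z \<Longrightarrow> \<bar>V y - L\<bar> < d"
          unfolding eventually_at_left_field dist_real_def by blast
        show ?thesis unfolding eventually_at_left_field
        proof (intro exI[of _ b] conjI allI impI)
          fix y assume y: "b < y" "y < z"
          show "y \<notin> EV V x"
          proof (cases "0 < y")
            case True
            show ?thesis
            proof (rule not_ev_near[where c = L and d = d])
              show "\<bar>V y - L\<bar> < d" using b y by auto
              show "\<bar>left_lim V y - L\<bar> \<le> d"
                by (rule ll_est[where b = b]) (use y True b in auto)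
            qed (use True in \<open>simp_all add: d_def\<close>)
          qed (auto simp: EV_def)
        qed (rule b)
      qed
      show "\<not> \<not> (\<forall>\<^sub>F y in at z. y \<notin> EV V x)"
        using left right by (simp add: eventually_at_split)
    qed
  qed simp
  then show ?thesis by (simp add: Int_commute)
qed

lemma single:
  assumes p0: "0 \<le> p" and pm: "p < m" and mb: "m \<le> b" and E: "EV V x \<inter> {p<..b} = {m}"
    and Vp: "V p \<noteq> x" and Vb: "V b \<noteq> x"
  shows "ind V x b - ind V x p = cc V x m"
proof -
  have mpos: "m > 0" using p0 pm by simp
  have mE: "m \<in> EV V x" using E by auto
  have noL: "EV V x \<inter> {p<..u} = {}" if "u < m" for u
  proof -
    have "s = m" if "s \<in> EV V x" "p < s" "s \<le> u" for s
    proof -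
      have "s \<in> EV V x \<inter> {p<..b}" using that \<open>u < m\<close> mb by auto
      then show ?thesis using E by blast
    qed
    then show ?thesis using that by force
  qed
  have noR: "EV V x \<inter> {u<..b} = {}" if "m \<le> u" for u
  proof -
    have "s = m" if "s \<in> EV V x" "u < s" "s \<le> b" for s
    proof -
      have "s \<in> EV V x \<inter> {p<..b}" using that \<open>m \<le> u\<close> pm by auto
      then show ?thesis using E by blast
    qed
    then show ?thesis using that by force
  qed
  have left: "(V p < x \<longrightarrow> V u < x) \<and> (V p > x \<longrightarrow> V u > x)" if "p \<le> u" "u < m" for u
    using sign_prop[OF p0 that(1) order_refl noL[OF that(2)]] .
  have right: "(V b < x \<longrightarrow> V u < x) \<and> (V b > x \<longrightarrow> V u > x)" if "m < u" "u \<le> b" for u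
  proof -
    have "u \<notin> EV V x" using E that pm by auto
    then have "V u \<noteq> x" using that mpos nonev[of u] by auto
    moreover have "(V u < x \<longrightarrow> V b < x) \<and> (V u > x \<longrightarrow> V b > x)"
      using sign_prop[of u b b] that mpos noR[of u] by auto
    ultimately show ?thesis by auto
  qed
  have LL: "(V p < x \<longrightarrow> left_lim V m \<le> x) \<and> (V p > x \<longrightarrow> left_lim V m \<ge> x)"
  proof (intro conjI impI)
    assume "V p < x"
    show "left_lim V m \<le> x"
    proof (rule tendsto_upperbound[OF lc[OF mpos]])
      show "\<forall>\<^sub>F i in at_left m. V i \<le> x"
        unfolding eventually_at_left_field using pm left \<open>V p < x\<close>
        by (intro exI[of _ p]) (auto intro: less_imp_le)
    qed simp
  next
    assume "V p > x"
    show "left_lim V m \<ge> x"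
    proof (rule tendsto_lowerbound[OF lc[OF mpos]])
      show "\<forall>\<^sub>F i in at_left m. V i \<ge> x"
        unfolding eventually_at_left_field using pm left \<open>V p > x\<close>
        by (intro exI[of _ p]) (auto intro: less_imp_le)
    qed simp
  qed
  have VM: "(V b < x \<longrightarrow> V m \<le> x) \<and> (V b > x \<longrightarrow> V m \<ge> x)" if "m < b"
  proof (intro conjI impI)
    assume "V b < x"
    show "V m \<le> x"
    proof (rule tendsto_upperbound[OF rc])
      show "\<forall>\<^sub>F i in at_right m. V i \<le> x"
        unfolding eventually_at_right_field using that right \<open>V b < x\<close>
        by (intro exI[of _ b]) (auto intro: less_imp_le)
    qed (use mpos in simp_all)
  next
    assume "V b > x"
    show "V m \<ge> x"
    proof (rule tendsto_lowerbound[OF rc])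
      show "\<forall>\<^sub>F i in at_right m. V i \<ge> x"
        unfolding eventually_at_right_field using that right \<open>V b > x\<close>
        by (intro exI[of _ b]) (auto intro: less_imp_le)
    qed (use mpos in simp_all)
  qed
  show ?thesis
  proof (cases "V m = x")
    case True
    have mb': "m < b" using True Vb mb by (cases "m = b") auto
    have LLx: "left_lim V m = x" using jmp[OF mpos] True by auto
    have cont: "continuous (at m within {0..}) V"
    proof -
      have l1: "(V \<longlongrightarrow> V m) (at_left m)" using lc[OF mpos] LLx True by simp
      have "continuous (at m) V"
        unfolding continuous_at using filterlim_split_at[OF l1 rc[of m]] mpos by simp
      then show ?thesis by (rule continuous_at_imp_continuous_within)
    qed
    have contn: "continuous (at m within {0..}) (\<lambda>s. - V s)"
      using cont by (intro continuous_minus)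
    have jz: "indicator {x..} (V m) - indicator {x..} (left_lim V m) = (0::real)"
      using True LLx by simp
    have Lside: "V u < x" if "V p < x" "p < u" "u < m" for u using left that by auto
    have Lside': "V u > x" if "V p > x" "p < u" "u < m" for u using left that by auto
    have Rside: "V u < x" if "V b < x" "m < u" "u < b" for u using right that by auto
    have Rside': "V u > x" if "V b > x" "m < u" "u < b" for u using right that by auto
    consider "V p < x" "V b > x" | "V p > x" "V b < x" | "V p < x" "V b < x" | "V p > x" "V b > x"
      using Vp Vb by linarith
    then show ?thesis
    proof cases
      case 1
      have "increases_through V x m"
        by (rule incr_yes[OF True cont pm mb']) (use 1 Lside Rside' in auto)
      moreover have "\<not> increases_through (\<lambda>s. - V s) (- x) m"
        by (rule incr_no_right[OF _ mb']) (use mpos 1 Rside' True in auto)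
      ultimately show ?thesis using 1 True
        by (simp add: cc_def ind_def LLx incr_set_def decr_set_def decreases_through_def)
    next
      case 2
      have "increases_through (\<lambda>s. - V s) (- x) m"
        by (rule incr_yes[OF _ contn pm mb']) (use 2 Lside' Rside True in auto)
      moreover have "\<not> increases_through V x m"
        by (rule incr_no_right[OF _ mb']) (use mpos 2 Rside True in auto)
      ultimately show ?thesis using 2 True
        by (simp add: cc_def ind_def LLx incr_set_def decr_set_def decreases_through_def)
    next
      case 3
      have "\<not> increases_through (\<lambda>s. - V s) (- x) m"
        by (rule incr_no_left[OF p0 pm]) (use 3 Lside True in auto)
      moreover have "\<not> increases_through V x m"
        by (rule incr_no_right[OF _ mb']) (use mpos 3 Rside True in auto)
      ultimately show ?thesis using 3 True
        by (simp add: cc_def ind_def LLx incr_set_def decr_set_def decreases_through_def)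
    next
      case 4
      have "\<not> increases_through (\<lambda>s. - V s) (- x) m"
        by (rule incr_no_right[OF _ mb']) (use mpos 4 Rside' True in auto)
      moreover have "\<not> increases_through V x m"
        by (rule incr_no_left[OF p0 pm]) (use 4 Lside' True in auto)
      ultimately show ?thesis using 4 True
        by (simp add: cc_def ind_def LLx incr_set_def decr_set_def decreases_through_def)
    qed
  next
    case False
    have nI: "\<not> increases_through V x m" using False by (simp add: increases_through_def)
    have nD: "\<not> increases_through (\<lambda>s. - V s) (- x) m" using False by (simp add: increases_through_def)
    have cross: "(left_lim V m < x \<and> x < V m) \<or> (V m < x \<and> x < left_lim V m)"
      using mE False by (auto simp: EV_def)
    have sideb: "(V b < x \<longrightarrow> V m < x) \<and> (V b > x \<longrightarrow> V m > x)"
    proof (cases "m = b")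
      case False
      then show ?thesis using VM mb \<open>V m \<noteq> x\<close> by fastforce
    qed simp
    have "indicator {x..} (V b) = (indicator {x..} (V m) :: real)"
      using sideb Vb by (cases "V b < x") (auto simp: indicator_def)
    moreover have "indicator {x..} (V p) = (indicator {x..} (left_lim V m) :: real)"
      using LL cross Vp by (cases "V p < x") (auto simp: indicator_def)
    ultimately show ?thesis using nI nD
      by (simp add: cc_def ind_def incr_set_def decr_set_def decreases_through_def)
  qed
qed

lemma sum_formula:
  assumes "card (EV V x \<inter> {a<..b}) = n" "0 \<le> a" "a \<le> b" "V a \<noteq> x" "V b \<noteq> x"
  shows "ind V x b - ind V x a = (\<Sum>m\<in>EV V x \<inter> {a<..b}. cc V x m)"
  using assms
proof (induction n arbitrary: b)
  case 0
  have "finite (EV V x \<inter> {a<..b})"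
    by (rule finite_subset[OF _ ev_finite[of b]]) (use 0 in auto)
  then have E: "EV V x \<inter> {a<..b} = {}" using 0 by simp
  have "(V a < x \<longrightarrow> V b < x) \<and> (V a > x \<longrightarrow> V b > x)"
    using sign_prop[of a b b] 0 E by auto
  then have "ind V x b = ind V x a" using 0 by (cases "V a < x") (auto simp: ind_def indicator_def)
  then show ?case using E by simp
next
  case (Suc n)
  define A where "A = EV V x \<inter> {a<..b}"
  have finA: "finite A" unfolding A_def
    by (rule finite_subset[OF _ ev_finite[of b]]) (use Suc in auto)
  have Ane: "A \<noteq> {}" using Suc finA by (auto simp: A_def)
  define m where "m = Max A"
  have mA: "m \<in> A" using finA Ane by (simp add: m_def)
  have leM: "s \<le> m" if "s \<in> A" for s using finA that by (simp add: m_def)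
  define A' where "A' = A - {m}"
  have finA': "finite A'" using finA by (simp add: A'_def)
  have cardA': "card A' = n" using Suc(2) mA finA by (simp add: A'_def A_def[symmetric])
  define p where "p = (if A' = {} then a else Max A')"
  have ap: "a \<le> p"
  proof (cases "A' = {}")
    case False
    then have "Max A' \<in> A'" using finA' by simp
    then show ?thesis using False by (auto simp: p_def A'_def A_def)
  qed (simp add: p_def)
  have pm: "p < m"
  proof (cases "A' = {}")
    case True
    then show ?thesis using mA by (auto simp: p_def A_def)
  next
    case False
    then have "Max A' \<in> A'" using finA' by simp
    then have "Max A' \<le> m" "Max A' \<noteq> m" using leM by (auto simp: A'_def)
    then show ?thesis using False by (simp add: p_def)
  qed
  have leP: "s \<le> p" if "s \<in> A'" for s
    using that finA' by (auto simp: p_def)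
  define b' where "b' = (p + m) / 2"
  have b': "p < b'" "b' < m" using pm by (auto simp: b'_def)
  have mb: "m \<le> b" "a < m" using mA by (auto simp: A_def)
  have E1: "EV V x \<inter> {a<..b'} = A'"
  proof
    show "EV V x \<inter> {a<..b'} \<subseteq> A'"
      using b' mb by (auto simp: A'_def A_def)
    show "A' \<subseteq> EV V x \<inter> {a<..b'}"
      using leP b' by (force simp: A'_def A_def)
  qed
  have b'E: "b' \<notin> EV V x"
  proof
    assume "b' \<in> EV V x"
    then have "b' \<in> A'" using E1 ap b' by auto
    then show False using leP b' by fastforce
  qed
  have Vb': "V b' \<noteq> x" using b'E ap b' Suc(3) by (auto simp: EV_def)
  have E2: "EV V x \<inter> {b'<..b} = {m}"
  proof
    show "EV V x \<inter> {b'<..b} \<subseteq> {m}"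
    proof
      fix s assume s: "s \<in> EV V x \<inter> {b'<..b}"
      then have "s \<in> A" using ap b' by (auto simp: A_def)
      moreover have "s \<notin> A'" using leP s b' by fastforce
      ultimately show "s \<in> {m}" by (auto simp: A'_def)
    qed
    show "{m} \<subseteq> EV V x \<inter> {b'<..b}" using mA b' by (auto simp: A_def)
  qed
  have IH: "ind V x b' - ind V x a = (\<Sum>m\<in>A'. cc V x m)"
    using Suc.IH[of b'] E1 cardA' Suc(3,5) ap b' Vb' by auto
  have S: "ind V x b - ind V x b' = cc V x m"
    by (rule single) (use Suc(3) ap b' mb E2 Vb' Suc(6) in auto)
  have "(\<Sum>m\<in>A. cc V x m) = cc V x m + (\<Sum>m\<in>A'. cc V x m)"
    unfolding A'_def using finA mA by (rule sum.remove)
  then show ?case using IH S by (simp add: A_def)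
qed

end

theorem mainTheorem5:
  fixes V :: "real \<Rightarrow> real" and t x :: real
  assumes "cadlag_on_nonneg V"
    and "finite_variation_compacts V"
    and "t > 0"
    and "simple_level V x"
    and "x \<noteq> V 0" and "x \<noteq> V t"
  shows "finite ({0<..t} \<inter> incr_set V x) \<and>
         finite ({0<..t} \<inter> decr_set V x) \<and>
         finite {s \<in> {0<..t}. indicator {x..} (V s) - indicator {x..} (left_lim V s) \<noteq> (0::real)} \<and>
         (indicator {x..} (V t) :: real) =
           indicator {x..} (V 0) + real_of_int (level_count V x t)
           + (\<Sum>s \<in> {s \<in> {0<..t}. indicator {x..} (V s) - indicator {x..} (left_lim V s) \<noteq> (0::real)}.
                indicator {x..} (V s) - indicator {x..} (left_lim V s))"
proof -
  have lc: "(V \<longlongrightarrow> left_lim V s) (at_left s)" if s0: "0 < s" for s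
  proof -
    obtain L where L: "(V \<longlongrightarrow> L) (at_left s)" using assms(1) s0 by (auto simp: cadlag_on_nonneg_def)
    then have "left_lim V s = L" unfolding left_lim_def by (intro tendsto_Lim) auto
    then show ?thesis using L by simp
  qed
  interpret lvl V x
  proof
    show "(V \<longlongrightarrow> V s) (at_right s)" if "0 \<le> s" for s
      using assms(1) that by (auto simp: cadlag_on_nonneg_def)
    show "(V \<longlongrightarrow> left_lim V s) (at_left s)" if "0 < s" for s using lc that .
    show "V s = left_lim V s" if "0 < s" "V s = x \<or> left_lim V s = x" for s
      using assms(4) that unfolding simple_level_def by force
    show "discrete (EV V x)" using assms(4) unfolding simple_level_def EV_def by auto
    show "V 0 \<noteq> x" using assms(5) by simp
  qed
  define A where "A = EV V x \<inter> {0<..t}"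
  have finA: "finite A" unfolding A_def
    by (rule finite_subset[OF _ ev_finite[of t]]) auto
  have IA: "{0<..t} \<inter> incr_set V x \<subseteq> A"
    by (auto simp: A_def EV_def incr_set_def increases_through_def)
  have DA: "{0<..t} \<inter> decr_set V x \<subseteq> A"
    by (auto simp: A_def EV_def decr_set_def decreases_through_def increases_through_def)
  define J where "J = {s \<in> {0<..t}. indicator {x..} (V s) - indicator {x..} (left_lim V s) \<noteq> (0::real)}"
  have jz: "indicator {x..} (V s) - indicator {x..} (left_lim V s) = (0::real)"
    if "0 < s" "s \<notin> EV V x" for s
    using nonev[OF that] by (auto simp: indicator_def)
  have JA: "J \<subseteq> A" using jz by (force simp: J_def A_def)
  have main: "ind V x t - ind V x 0 = (\<Sum>m\<in>A. cc V x m)"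
    unfolding A_def by (rule sum_formula) (use assms in auto)
  have "(\<Sum>m\<in>A. cc V x m) =
      (\<Sum>m\<in>A. indicator {x..} (V m) - indicator {x..} (left_lim V m))
      + (\<Sum>m\<in>A. of_bool (m \<in> incr_set V x)) - (\<Sum>m\<in>A. of_bool (m \<in> decr_set V x))"
    by (simp add: cc_def sum.distrib sum_subtractf)
  also have "(\<Sum>m\<in>A. indicator {x..} (V m) - indicator {x..} (left_lim V m)) =
      (\<Sum>m\<in>J. indicator {x..} (V m) - (indicator {x..} (left_lim V m) :: real))"
    by (rule sum.mono_neutral_right[OF finA JA]) (auto simp: J_def A_def)
  also have "(\<Sum>m\<in>A. of_bool (m \<in> incr_set V x)) = real (card ({0<..t} \<inter> incr_set V x))"
  proof -
    have "A \<inter> {m. m \<in> incr_set V x} = {0<..t} \<inter> incr_set V x" using IA by (auto simp: A_def)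
    then show ?thesis using finA by simp
  qed
  also have "(\<Sum>m\<in>A. of_bool (m \<in> decr_set V x)) = real (card ({0<..t} \<inter> decr_set V x))"
  proof -
    have "A \<inter> {m. m \<in> decr_set V x} = {0<..t} \<inter> decr_set V x" using DA by (auto simp: A_def)
    then show ?thesis using finA by simp
  qed
  finally have eq: "(\<Sum>m\<in>A. cc V x m) = (\<Sum>m\<in>J. indicator {x..} (V m) - (indicator {x..} (left_lim V m) :: real))
      + real_of_int (level_count V x t)"
    by (simp add: level_count_def)
  show ?thesis
  proof (intro conjI)
    show "finite ({0<..t} \<inter> incr_set V x)" using IA finA by (rule finite_subset)
    show "finite ({0<..t} \<inter> decr_set V x)" using DA finA by (rule finite_subset)
    show "finite {s \<in> {0<..t}. indicator {x..} (V s) - indicator {x..} (left_lim V s) \<noteq> (0::real)}"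
      using JA finA unfolding J_def by (rule finite_subset)
    show "(indicator {x..} (V t) :: real) =
           indicator {x..} (V 0) + real_of_int (level_count V x t)
           + (\<Sum>s \<in> {s \<in> {0<..t}. indicator {x..} (V s) - indicator {x..} (left_lim V s) \<noteq> (0::real)}.
                indicator {x..} (V s) - indicator {x..} (left_lim V s))"
      using main eq unfolding J_def ind_def by simp
  qed
qed

end
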